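(* Let $(P,U)$ and $(Q,V)$ be real affine spaces ($P$ modelled on the vector space $U$, $Q$ on $V$), let $g:P\to Q$ be a mapping and $f\in A(Q)$. For each $n\in\mathbb N$, $p\in P$ and $u_1,\dots,u_n\in U$, $$\delta^n(f\circ g)(p;u_1,\dots,u_n)=\sum_{\{I^1,\dots,I^k\}}\delta^k f\Big(g(p);\,\delta^{|I^1|}g(p;\mathbf u^{I^1}),\dots,\delta^{|I^k|}g(p;\mathbf u^{I^k})\Big),$$ where the sum runs over all finite sets $\{I^1,\dots,I^k\}$ ($k\ge0$) of pairwise distinct nonempty subsets of $N=\{1,\dots,n\}$ with $\bigcup_{i=1}^k I^i=N$ (the blocks may overlap).
   Context: $A(Q)$ is the space of real functions on $Q$. For $I=\{i_1<\dots<i_m\}\subset N$, $\mathbf u^I=(u_{i_1},\dots,u_{i_m})$. The $k$-th polarization of $f\in A(Q)$ is $\delta^0f=f$ and, for $k\ge1$, $\delta^kf(q;v_1,\dots,v_k)=(-1)^k\sum_{J\subset\{1,\dots,k\}}(-1)^{|J|}f(q+\sum_{j\in J}v_j)$ (the $J=\emptyset$ term being $f(q)$); it is symmetric in the $v_j$. For a mapping $g:P\to Q$ and $m\ge1$, $\delta^m g(p;u_1,\dots,u_m)=(-1)^m\sum_{J\subset\{1,\dots,m\}}(-1)^{|J|}g(p+\sum_{j\in J}u_j)\in V$ (an affine combination of points with coefficients summing to $0$, hence a vector of $V$). *)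

theory Defs
  imports Main "HOL-Analysis.Analysis"
begin

text \<open>Affine spaces are modelled by their translation vector spaces (after fixing an
origin): points of P are elements of a real vector space 'u, translation is +.\<close>

definition polar :: "('v::real_vector \<Rightarrow> real) \<Rightarrow> 'v \<Rightarrow> 'v list \<Rightarrow> real" where
  "polar f q vs = (-1) ^ length vs *
     (\<Sum>J\<in>Pow {..<length vs}. (-1) ^ card J * f (q + (\<Sum>j\<in>J. vs ! j)))"

definition polar_map :: "('u::real_vector \<Rightarrow> 'v::real_vector) \<Rightarrow> 'u \<Rightarrow> 'u list \<Rightarrow> 'v" where
  "polar_map g p us = (-1) ^ length us *\<^sub>R
     (\<Sum>J\<in>Pow {..<length us}. (-1) ^ card J *\<^sub>R g (p + (\<Sum>j\<in>J. us ! j)))"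

text \<open>An enumeration I^1,...,I^k of a finite set of blocks (any order; polar is symmetric).\<close>
definition enum_blocks :: "'a set set \<Rightarrow> 'a set list" where
  "enum_blocks S = (SOME L. distinct L \<and> set L = S)"

definition sub_tuple :: "(nat \<Rightarrow> 'u) \<Rightarrow> nat set \<Rightarrow> 'u list" where
  "sub_tuple us I = map us (sorted_list_of_set I)"

definition covers :: "nat \<Rightarrow> nat set set set" where
  "covers n = {S. S \<subseteq> {I. I \<subseteq> {1..n} \<and> I \<noteq> {}} \<and> \<Union>S = {1..n}}"

end

theory Submission
  imports Defs
begin

lemma alt_super:
  assumes "finite J" "K \<subseteq> J"
  shows "(\<Sum>I | I \<subseteq> J \<and> K \<subseteq> I. (-1::real) ^ card I) = (if K = J then (-1) ^ card J else 0)"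
proof (cases "K = J")
  case True
  then have "{I. I \<subseteq> J \<and> K \<subseteq> I} = {J}" by auto
  then show ?thesis using True by simp
next
  case False
  then have "K \<subset> J" using assms by auto
  then show ?thesis using False assms
    by (simp add: sum_alternating_cancels card_subsupersets_even_odd)
qed

lemma alt_pow:
  assumes "finite J"
  shows "(\<Sum>I\<in>Pow J. (-1::real) ^ card I) = (if J = {} then 1 else 0)"
proof -
  have "Pow J = {I. I \<subseteq> J \<and> {} \<subseteq> I}" by auto
  then show ?thesis using alt_super[OF assms, of "{}"] by auto
qed

lemma pow_reindex_list:
  assumes "distinct L"
  shows "(\<Sum>J\<in>Pow {..<length L}. H (card J) (\<Sum>j\<in>J. h (L ! j))) =
         (\<Sum>B\<in>Pow (set L). H (card B) (\<Sum>x\<in>B. h x))"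
proof (rule sum.reindex_bij_witness[where i = "\<lambda>B. {j. j < length L \<and> L ! j \<in> B}" and j = "\<lambda>J. (!) L ` J"])
  fix B assume "B \<in> Pow (set L)"
  then show "(!) L ` {j. j < length L \<and> L ! j \<in> B} = B"
  proof (intro equalityI subsetI)
    fix x assume "x \<in> B"
    with \<open>B \<in> Pow (set L)\<close> obtain i where "i < length L" "L ! i = x"
      by (meson PowD in_set_conv_nth subsetD)
    then show "x \<in> (!) L ` {j. j < length L \<and> L ! j \<in> B}"
      using \<open>x \<in> B\<close> by force
  qed auto
next
  fix B assume "B \<in> Pow (set L)"
  then show "{j. j < length L \<and> L ! j \<in> B} \<in> Pow {..<length L}" by auto
next
  fix J assume J: "J \<in> Pow {..<length L}"
  then show "{j. j < length L \<and> L ! j \<in> (!) L ` J} = J"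
    using assms by (auto simp: nth_eq_iff_index_eq)
  show "(!) L ` J \<in> Pow (set L)" using J by auto
  have inj: "inj_on ((!) L) J" using J assms unfolding inj_on_def
    by (metis PowD lessThan_iff nth_eq_iff_index_eq subsetD)
  show "H (card ((!) L ` J)) (\<Sum>x\<in>(!) L ` J. h x) = H (card J) (\<Sum>j\<in>J. h (L ! j))"
    by (simp add: card_image[OF inj] sum.reindex[OF inj])
qed

lemma polar_list:
  assumes "distinct L"
  shows "polar F q (map h L) = (-1) ^ length L *
     (\<Sum>B\<in>Pow (set L). (-1) ^ card B * F (q + (\<Sum>x\<in>B. h x)))"
proof -
  have aux: "(\<Sum>j\<in>J. map h L ! j) = (\<Sum>j\<in>J. h (L ! j))" if "J \<in> Pow {..<length L}" for J
    using that by (auto intro!: sum.cong)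
  have "(\<Sum>J\<in>Pow {..<length L}. (-1) ^ card J * F (q + (\<Sum>j\<in>J. map h L ! j))) =
        (\<Sum>J\<in>Pow {..<length L}. (\<lambda>c s. (-1) ^ c * F (q + s)) (card J) (\<Sum>j\<in>J. h (L ! j)))"
    using aux by (intro sum.cong refl) simp
  also have "\<dots> = (\<Sum>B\<in>Pow (set L). (-1) ^ card B * F (q + (\<Sum>x\<in>B. h x)))"
    by (rule pow_reindex_list[OF assms])
  finally show ?thesis unfolding polar_def by simp
qed

lemma polar_map_list:
  assumes "distinct L"
  shows "polar_map G q (map h L) = (-1) ^ length L *\<^sub>R
     (\<Sum>B\<in>Pow (set L). (-1) ^ card B *\<^sub>R G (q + (\<Sum>x\<in>B. h x)))"
proof -
  have aux: "(\<Sum>j\<in>J. map h L ! j) = (\<Sum>j\<in>J. h (L ! j))" if "J \<in> Pow {..<length L}" for J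
    using that by (auto intro!: sum.cong)
  have "(\<Sum>J\<in>Pow {..<length L}. (-1) ^ card J *\<^sub>R G (q + (\<Sum>j\<in>J. map h L ! j))) =
        (\<Sum>J\<in>Pow {..<length L}. (\<lambda>c s. (-1) ^ c *\<^sub>R G (q + s)) (card J) (\<Sum>j\<in>J. h (L ! j)))"
    using aux by (intro sum.cong refl) simp
  also have "\<dots> = (\<Sum>B\<in>Pow (set L). (-1) ^ card B *\<^sub>R G (q + (\<Sum>x\<in>B. h x)))"
    by (rule pow_reindex_list[OF assms])
  finally show ?thesis unfolding polar_map_def by simp
qed

lemma mobius:
  fixes G :: "nat set \<Rightarrow> 'v::real_vector"
  assumes "finite J"
  shows "(\<Sum>I\<in>Pow J. (-1) ^ card I *\<^sub>R (\<Sum>K\<in>Pow I. (-1) ^ card K *\<^sub>R G K)) = G J"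
proof -
  have "(\<Sum>I\<in>Pow J. (-1) ^ card I *\<^sub>R (\<Sum>K\<in>Pow I. (-1) ^ card K *\<^sub>R G K)) =
        (\<Sum>I\<in>Pow J. (\<Sum>K\<in>{K. K \<in> Pow J \<and> K \<subseteq> I}. ((-1) ^ card I * (-1) ^ card K) *\<^sub>R G K))"
  proof (intro sum.cong refl)
    fix I assume "I \<in> Pow J"
    then have "Pow I = {K. K \<in> Pow J \<and> K \<subseteq> I}" by auto
    then show "(-1) ^ card I *\<^sub>R (\<Sum>K\<in>Pow I. (-1) ^ card K *\<^sub>R G K) =
        (\<Sum>K\<in>{K. K \<in> Pow J \<and> K \<subseteq> I}. ((-1) ^ card I * (-1) ^ card K) *\<^sub>R G K)"
      by (simp add: scaleR_sum_right)
  qed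
  also have "\<dots> = (\<Sum>K\<in>Pow J. (\<Sum>I\<in>{I. I \<in> Pow J \<and> K \<subseteq> I}. ((-1) ^ card I * (-1) ^ card K) *\<^sub>R G K))"
    by (rule sum.swap_restrict) (use assms in auto)
  also have "\<dots> = (\<Sum>K\<in>Pow J. ((\<Sum>I | I \<subseteq> J \<and> K \<subseteq> I. (-1::real) ^ card I) * (-1) ^ card K) *\<^sub>R G K)"
    by (simp add: scaleR_sum_left sum_distrib_right)
  also have "\<dots> = (\<Sum>K\<in>Pow J. (if K = J then G J else 0))"
  proof (intro sum.cong refl)
    fix K assume "K \<in> Pow J"
    then show "((\<Sum>I | I \<subseteq> J \<and> K \<subseteq> I. (-1::real) ^ card I) * (-1) ^ card K) *\<^sub>R G K = (if K = J then G J else 0)"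
      using alt_super[OF assms, of K] by (simp flip: power_add)
  qed
  also have "\<dots> = G J" using assms by simp
  finally show ?thesis .
qed

lemma comb:
  fixes F :: "nat set set \<Rightarrow> real"
  shows "(\<Sum>S\<in>covers n. (-1) ^ card S * (\<Sum>A\<in>Pow S. (-1) ^ card A * F A)) =
    (-1) ^ n * (\<Sum>J\<in>Pow {1..n}. (-1) ^ card J * F {I. I \<subseteq> J \<and> I \<noteq> {}})"
proof -
  define N where "N = {1..n}"
  define C where "C = {I. I \<subseteq> N \<and> I \<noteq> {}}"
  define X where "X S = (-1) ^ card S * (\<Sum>A\<in>Pow S. (-1) ^ card A * F A)" for S
  have finN: "finite N" unfolding N_def by simp
  have finC: "finite C" unfolding C_def using finN by (auto intro: finite_subset[of _ "Pow N"])
  have cov: "covers n = {S \<in> Pow C. \<Union>S = N}" unfolding covers_def C_def N_def by auto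
  have "(\<Sum>S\<in>covers n. X S) = (\<Sum>S\<in>Pow C. if \<Union>S = N then X S else 0)"
    unfolding cov using sum.inter_filter[OF finite_Pow_iff[THEN iffD2, OF finC], of X "\<lambda>S. \<Union>S = N"] by simp
  also have "\<dots> = (\<Sum>S\<in>Pow C. (\<Sum>T\<in>{T. T \<in> Pow N \<and> T \<inter> \<Union>S = {}}. (-1) ^ card T * X S))"
  proof (intro sum.cong refl)
    fix S assume S: "S \<in> Pow C"
    then have sub: "\<Union>S \<subseteq> N" unfolding C_def by auto
    have e: "{T. T \<in> Pow N \<and> T \<inter> \<Union>S = {}} = Pow (N - \<Union>S)" by auto
    have "(\<Sum>T\<in>Pow (N - \<Union>S). (-1::real) ^ card T) = (if N - \<Union>S = {} then 1 else 0)"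
      using alt_pow finN by blast
    moreover have "(N - \<Union>S = {}) = (\<Union>S = N)" using sub by auto
    ultimately show "(if \<Union>S = N then X S else 0) = (\<Sum>T\<in>{T. T \<in> Pow N \<and> T \<inter> \<Union>S = {}}. (-1) ^ card T * X S)"
      unfolding e by (simp add: sum_distrib_right[symmetric])
  qed
  also have "\<dots> = (\<Sum>T\<in>Pow N. (\<Sum>S\<in>{S. S \<in> Pow C \<and> T \<inter> \<Union>S = {}}. (-1) ^ card T * X S))"
    by (rule sum.swap_restrict) (use finC finN in auto)
  also have "\<dots> = (\<Sum>T\<in>Pow N. (-1) ^ card T * F {I. I \<subseteq> N - T \<and> I \<noteq> {}})"
  proof (intro sum.cong refl)
    fix T assume T: "T \<in> Pow N"
    define D where "D = {I. I \<subseteq> N - T \<and> I \<noteq> {}}"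
    have finD: "finite D" unfolding D_def using finN by (auto intro: finite_subset[of _ "Pow N"])
    have e: "{S. S \<in> Pow C \<and> T \<inter> \<Union>S = {}} = Pow D" unfolding D_def C_def by auto
    have "F D = (\<Sum>S\<in>Pow D. (-1) ^ card S * (\<Sum>A\<in>Pow S. (-1) ^ card A * F A))"
      by (rule inclusion_exclusion_symmetric[OF _ finD]) simp
    then show "(\<Sum>S\<in>{S. S \<in> Pow C \<and> T \<inter> \<Union>S = {}}. (-1) ^ card T * X S) =
        (-1) ^ card T * F {I. I \<subseteq> N - T \<and> I \<noteq> {}}"
      unfolding e X_def D_def[symmetric] by (simp add: sum_distrib_left)
  qed
  also have "\<dots> = (\<Sum>J\<in>Pow N. (-1) ^ card (N - J) * F {I. I \<subseteq> J \<and> I \<noteq> {}})"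
    by (rule sum.reindex_bij_witness[where i = "\<lambda>J. N - J" and j = "\<lambda>J. N - J"]) (auto simp: double_diff)
  also have "\<dots> = (\<Sum>J\<in>Pow N. (-1) ^ n * ((-1) ^ card J * F {I. I \<subseteq> J \<and> I \<noteq> {}}))"
  proof (intro sum.cong refl)
    fix J assume J: "J \<in> Pow N"
    then have "card (N - J) = n - card J" "card J \<le> n"
      using finN card_mono[OF finN, of J] by (auto simp: card_Diff_subset finite_subset N_def)
    then have "(-1::real) ^ card (N - J) = (-1) ^ n * (-1) ^ card J"
      by (simp add: neg_one_power_add_eq_neg_one_power_diff flip: power_add)
    then show "(-1) ^ card (N - J) * F {I. I \<subseteq> J \<and> I \<noteq> {}} = (-1) ^ n * ((-1) ^ card J * F {I. I \<subseteq> J \<and> I \<noteq> {}})"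
      by simp
  qed
  finally show ?thesis unfolding X_def N_def by (simp add: sum_distrib_left)
qed

theorem proposition4:
  fixes g :: "'u::real_vector \<Rightarrow> 'v::real_vector" and f :: "'v \<Rightarrow> real"
    and n :: nat and p :: 'u and us :: "nat \<Rightarrow> 'u"
  shows "polar (f \<circ> g) p (map us [1..<n+1]) =
    (\<Sum>S\<in>covers n. polar f (g p)
        (map (\<lambda>I. polar_map g p (sub_tuple us I)) (enum_blocks S)))"
proof -
  define e where "e I = polar_map g p (sub_tuple us I)" for I
  define G where "G K = g (p + (\<Sum>x\<in>K. us x))" for K
  define F where "F A = f (g p + (\<Sum>I\<in>A. e I))" for A
  have eI: "e I = (-1) ^ card I *\<^sub>R (\<Sum>K\<in>Pow I. (-1) ^ card K *\<^sub>R G K)" if "finite I" for I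
    unfolding e_def sub_tuple_def G_def
    using polar_map_list[of "sorted_list_of_set I" g p us] that by simp
  have FC: "F {I. I \<subseteq> J \<and> I \<noteq> {}} = f (G J)" if "J \<in> Pow {1..n}" for J
  proof -
    have fJ: "finite J" using that finite_subset by auto
    have "Pow J = insert {} {I. I \<subseteq> J \<and> I \<noteq> {}}" by auto
    then have "(\<Sum>I\<in>Pow J. e I) = e {} + (\<Sum>I\<in>{I. I \<subseteq> J \<and> I \<noteq> {}}. e I)"
      using fJ by (simp add: sum.insert)
    moreover have "(\<Sum>I\<in>Pow J. e I) = G J"
      using mobius[OF fJ, of G] eI fJ by (simp add: finite_subset)
    moreover have "e {} = g p" using eI[of "{}"] by (simp add: G_def)
    ultimately show ?thesis unfolding F_def by (simp add: algebra_simps)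
  qed
  have "polar (f \<circ> g) p (map us [1..<n+1]) =
      (-1) ^ n * (\<Sum>J\<in>Pow {1..n}. (-1) ^ card J * f (G J))"
  proof -
    have d: "distinct [1..<n+1]" by simp
    have st: "set [1..<n+1] = {1..n}" by auto
    have l: "length [1..<n+1] = n" by simp
    have "polar (f \<circ> g) p (map us [1..<n+1]) =
      (-1) ^ n * (\<Sum>B\<in>Pow {1..n}. (-1) ^ card B * (f \<circ> g) (p + (\<Sum>x\<in>B. us x)))"
      using polar_list[OF d, of "f \<circ> g" p us] unfolding st l .
    then show ?thesis by (simp add: G_def)
  qed
  also have "\<dots> = (-1) ^ n * (\<Sum>J\<in>Pow {1..n}. (-1) ^ card J * F {I. I \<subseteq> J \<and> I \<noteq> {}})"
    using FC by simp
  also have "\<dots> = (\<Sum>S\<in>covers n. (-1) ^ card S * (\<Sum>A\<in>Pow S. (-1) ^ card A * F A))"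
    by (rule comb[symmetric])
  also have "\<dots> = (\<Sum>S\<in>covers n. polar f (g p) (map e (enum_blocks S)))"
  proof (intro sum.cong refl)
    fix S assume S: "S \<in> covers n"
    have "S \<subseteq> Pow {1..n}" using S unfolding covers_def by auto
    then have fS: "finite S" by (rule finite_subset) simp
    have L: "distinct (enum_blocks S) \<and> set (enum_blocks S) = S"
      unfolding enum_blocks_def by (rule someI_ex) (use finite_distinct_list[OF fS] in auto)
    then have "length (enum_blocks S) = card S" using distinct_card by fastforce
    then show "(-1) ^ card S * (\<Sum>A\<in>Pow S. (-1) ^ card A * F A) = polar f (g p) (map e (enum_blocks S))"
      using polar_list[of "enum_blocks S" f "g p" e] L by (simp add: F_def)
  qed
  finally show ?thesis unfolding e_def .
qed

end
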